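(* Let $n\ge2$, $a\ge\sqrt{n-1}$, $f(x)=a|x^{(1)}|+\sum_{i=2}^n x^{(i)}$ on $\mathbb{R}^n$, and $0<c_1<c_2<1$; let $\tau=c_1+\frac{(n-1)(c_1-1)}{a^2}$. Let $x_k\in\mathbb{R}^n$ with $x_k^{(1)}\ne0$, $d_k=-\nabla f(x_k)$, and $t_k\in\mathbb{R}$. Suppose $W(t_k)$ holds. Then $A(t_k)$ holds if and only if $$(1+\tau)\frac{at_k}{2}\le |x_k^{(1)}|.$$
   Context: $x^{(i)}$ is the $i$-th coordinate. The Armijo condition is $A(t)$: $f(x_k+td_k)\le f(x_k)+c_1t\nabla f(x_k)^Td_k$; the Wolfe condition is $W(t)$: $f$ is differentiable at $x_k+td_k$ and $\nabla f(x_k+td_k)^Td_k\ge c_2\nabla f(x_k)^Td_k$. *)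

theory Defs
  imports "HOL-Analysis.Analysis"
begin

text \<open>Gradient of a real-valued function on a real inner product space
  (meaningful where the function is differentiable).\<close>
definition grad :: "('a::real_inner \<Rightarrow> real) \<Rightarrow> 'a \<Rightarrow> 'a" where
  "grad f x = (THE D. GDERIV f x :> D)"

definition armijo :: "('a::real_inner \<Rightarrow> real) \<Rightarrow> real \<Rightarrow> 'a \<Rightarrow> 'a \<Rightarrow> real \<Rightarrow> bool" where
  "armijo f c1 x d t \<longleftrightarrow> f (x + t *\<^sub>R d) \<le> f x + c1 * t * (grad f x \<bullet> d)"

definition wolfe :: "('a::real_inner \<Rightarrow> real) \<Rightarrow> real \<Rightarrow> 'a \<Rightarrow> 'a \<Rightarrow> real \<Rightarrow> bool" where
  "wolfe f c2 x d t \<longleftrightarrow> f differentiable (at (x + t *\<^sub>R d)) \<and>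
     grad f (x + t *\<^sub>R d) \<bullet> d \<ge> c2 * (grad f x \<bullet> d)"

end

theory Submission
  imports Defs
begin

lemma grad_unique:
  assumes "GDERIV f y :> D" shows "grad f y = D"
  unfolding grad_def
proof (rule the_equality)
  show "GDERIV f y :> D" by (rule assms)
  fix D' assume "GDERIV f y :> D'"
  hence "(\<lambda>h. h \<bullet> D') = (\<lambda>h. h \<bullet> D)"
    using assms unfolding gderiv_def by (metis has_derivative_unique)
  hence "(D' - D) \<bullet> D' = (D' - D) \<bullet> D" by metis
  hence "(D' - D) \<bullet> (D' - D) = 0" by (simp add: inner_diff_right)
  thus "D' = D" by simp
qed

lemma inner_split:
  fixes g w :: "real ^ 'n"
  shows "g \<bullet> w = g $ i1 * w $ i1 + (\<Sum>i\<in>UNIV - {i1}. g $ i * w $ i)"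
  unfolding inner_vec_def by (simp add: sum.remove[of UNIV i1])

lemma grad_f:
  fixes y :: "real ^ 'n"
  assumes y: "y $ i1 \<noteq> 0"
  shows "grad (\<lambda>y. a * \<bar>y $ i1\<bar> + (\<Sum>i\<in>UNIV - {i1}. y $ i)) y
     = (\<chi> i. if i = i1 then a * sgn (y $ i1) else 1)"
proof (rule grad_unique)
  define g :: "real ^ 'n" where "g = (\<chi> i. if i = i1 then a * sgn (y $ i1) else 1)"
  have lin: "((\<lambda>w. w \<bullet> g) has_derivative (\<lambda>h. h \<bullet> g)) (at y)"
    by (intro bounded_linear_imp_has_derivative bounded_linear_inner_left)
  have op: "open {w::real^'n. 0 < w $ i1 * y $ i1}"
    by (intro open_Collect_less continuous_intros)
  have eq: "w \<bullet> g = a * \<bar>w $ i1\<bar> + (\<Sum>i\<in>UNIV - {i1}. w $ i)"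
    if "w \<in> {w::real^'n. 0 < w $ i1 * y $ i1}" for w
  proof -
    have "sgn (y $ i1) * w $ i1 = \<bar>w $ i1\<bar>"
      using that by (cases "y $ i1 > 0") (auto simp: zero_less_mult_iff)
    thus ?thesis
      unfolding inner_split[of w g i1] by (simp add: g_def algebra_simps)
  qed
  show "GDERIV (\<lambda>y. a * \<bar>y $ i1\<bar> + (\<Sum>i\<in>UNIV - {i1}. y $ i)) y :> (\<chi> i. if i = i1 then a * sgn (y $ i1) else 1)"
    unfolding gderiv_def g_def[symmetric]
    by (rule has_derivative_transform_within_open[OF lin op _ eq]) (use y in \<open>auto simp: zero_less_mult_iff\<close>)
qed

lemma nondiff:
  fixes z :: "real ^ 'n"
  assumes a: "a > 0" and z: "z $ i1 = 0"
    and d: "(\<lambda>y. a * \<bar>y $ i1\<bar> + (\<Sum>i\<in>UNIV - {i1}. y $ i)) differentiable at z"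
  shows False
proof -
  let ?f = "\<lambda>y::real^'n. a * \<bar>y $ i1\<bar> + (\<Sum>i\<in>UNIV - {i1}. y $ i)"
  let ?g = "\<lambda>s::real. z + s *\<^sub>R axis i1 1"
  define C where "C = (\<Sum>i\<in>UNIV - {i1}. z $ i)"
  have gd: "?g differentiable at 0"
    by (intro derivative_intros)
  have "(?f \<circ> ?g) differentiable at 0"
    by (rule differentiable_chain_at[OF gd]) (use d in simp)
  moreover have "?f \<circ> ?g = (\<lambda>s. a * \<bar>s\<bar> + C)"
    by (rule ext) (simp add: z C_def axis_def)
  ultimately obtain D where D: "((\<lambda>s. a * \<bar>s\<bar> + C) has_real_derivative D) (at 0)"
    using real_differentiable_def by metis
  have L: "((\<lambda>s. a * s) has_real_derivative a) (at 0)"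
    by (auto intro!: derivative_eq_intros)
  have "((\<lambda>s. a * \<bar>s\<bar> + C - a * s) has_real_derivative D - a) (at 0)"
    using DERIV_diff[OF D L] by simp
  hence 1: "D - a = 0"
    by (rule DERIV_local_min[of _ _ 0 1]) (use a in \<open>auto simp: abs_if mult_nonneg_nonpos\<close>)
  have "((\<lambda>s. a * \<bar>s\<bar> + C + a * s) has_real_derivative D + a) (at 0)"
    using DERIV_add[OF D L] by simp
  hence 2: "D + a = 0"
    by (rule DERIV_local_min[of _ _ 0 1]) (use a in \<open>auto simp: abs_if\<close>)
  from 1 2 a show False by simp
qed
theorem lemma2:
  fixes a c1 c2 t \<tau> :: real and x :: "real ^ 'n" and i1 :: 'n
    and f :: "real ^ 'n \<Rightarrow> real" and d :: "real ^ 'n"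
  assumes n2: "CARD('n) \<ge> 2"
    and ha: "a \<ge> sqrt (real CARD('n) - 1)"
    and hc: "0 < c1" "c1 < c2" "c2 < 1"
    and hf: "f = (\<lambda>y. a * \<bar>y $ i1\<bar> + (\<Sum>i\<in>UNIV - {i1}. y $ i))"
    and h\<tau>: "\<tau> = c1 + (real CARD('n) - 1) * (c1 - 1) / a\<^sup>2"
    and hx: "x $ i1 \<noteq> 0"
    and hd: "d = - grad f x"
    and hW: "wolfe f c2 x d t"
  shows "armijo f c1 x d t \<longleftrightarrow> (1 + \<tau>) * (a * t / 2) \<le> \<bar>x $ i1\<bar>"
proof -
  define N where "N = real CARD('n) - 1"
  have N1: "N \<ge> 1" using n2 by (simp add: N_def)
  have "sqrt N \<ge> 1" using N1 by simp
  hence a1: "a \<ge> 1" using ha unfolding N_def by linarith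
  hence a0: "a > 0" by simp
  have cardD: "real (card (UNIV - {i1})) = N"
    by (simp add: card_Diff_singleton N_def of_nat_diff)
  define s where "s = sgn (x $ i1)"
  have s2: "s * s = 1" using hx by (simp add: s_def sgn_if)
  have gx: "grad f x = (\<chi> i. if i = i1 then a * s else 1)"
    unfolding hf s_def by (rule grad_f[OF hx])
  have dd: "d = (\<chi> i. if i = i1 then - a * s else - 1)"
    unfolding hd gx by (simp add: vec_eq_iff)
  have gd: "grad f x \<bullet> d = - (a\<^sup>2 + N)"
    unfolding inner_split[of _ _ i1] gx dd using cardD s2
    by (simp add: power2_eq_square algebra_simps)
  define z where "z = x + t *\<^sub>R d"
  have z1: "z $ i1 = x $ i1 - t * a * s" by (simp add: z_def dd)
  have zi: "i \<noteq> i1 \<Longrightarrow> z $ i = x $ i - t" for i by (simp add: z_def dd)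
  have fdiff: "f differentiable at z" using hW by (simp add: wolfe_def z_def)
  have z10: "z $ i1 \<noteq> 0"
    using nondiff[OF a0 _ fdiff[unfolded hf]] by blast
  define sz where "sz = sgn (z $ i1)"
  have gz: "grad f z = (\<chi> i. if i = i1 then a * sz else 1)"
    unfolding hf sz_def by (rule grad_f[OF z10])
  have gzd: "grad f z \<bullet> d = - (a\<^sup>2 * s * sz + N)"
    unfolding inner_split[of _ _ i1] gz dd using cardD
    by (simp add: power2_eq_square algebra_simps)
  have W: "- (a\<^sup>2 * s * sz + N) \<ge> c2 * (- (a\<^sup>2 + N))"
    using hW gzd gd by (simp add: wolfe_def z_def)
  have ssz: "s * sz = -1"
  proof (rule ccontr)
    assume "s * sz \<noteq> -1"
    hence "s * sz = 1" using s2 z10 hx by (auto simp: s_def sz_def sgn_if split: if_splits)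
    hence "a\<^sup>2 * s * sz = a\<^sup>2" by (simp add: mult.assoc)
    hence "- (a\<^sup>2 + N) \<ge> c2 * (- (a\<^sup>2 + N))" using W by (simp only: \<open>a\<^sup>2 * s * sz = a\<^sup>2\<close>)
    moreover have "a\<^sup>2 + N > 0" using N1 by (simp add: add_nonneg_pos)
    ultimately have "(1 - c2) * (a\<^sup>2 + N) \<le> 0" "(1 - c2) * (a\<^sup>2 + N) > 0"
      using hc by (simp add: algebra_simps) (use hc \<open>a\<^sup>2 + N > 0\<close> in \<open>intro mult_pos_pos; simp\<close>)
    thus False by linarith
  qed
  have zabs: "\<bar>z $ i1\<bar> = t * a - \<bar>x $ i1\<bar>"
    using ssz z1 hx z10 unfolding s_def sz_def
    by (cases "x $ i1 > 0"; cases "z $ i1 > 0") (auto simp: sgn_if)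
  have fz: "f z = a * \<bar>z $ i1\<bar> + (\<Sum>i\<in>UNIV - {i1}. x $ i) - t * N"
  proof -
    have "(\<Sum>i\<in>UNIV - {i1}. z $ i) = (\<Sum>i\<in>UNIV - {i1}. x $ i - t)"
      by (rule sum.cong) (auto simp: zi)
    also have "\<dots> = (\<Sum>i\<in>UNIV - {i1}. x $ i) - t * N"
      using cardD by (simp add: sum_subtractf)
    finally show ?thesis by (simp add: hf)
  qed
  have fx: "f x = a * \<bar>x $ i1\<bar> + (\<Sum>i\<in>UNIV - {i1}. x $ i)" by (simp add: hf)
  have "armijo f c1 x d t \<longleftrightarrow> a * (t * a - \<bar>x $ i1\<bar>) - t * N \<le> a * \<bar>x $ i1\<bar> - c1 * t * (a\<^sup>2 + N)"
    unfolding armijo_def z_def[symmetric] fz fx zabs gd by (simp add: algebra_simps)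
  also have "\<dots> \<longleftrightarrow> t * (a\<^sup>2 * (1 + c1) + N * (c1 - 1)) \<le> 2 * a * \<bar>x $ i1\<bar>"
    by (simp add: algebra_simps power2_eq_square)
  also have "\<dots> \<longleftrightarrow> (1 + \<tau>) * (a * t / 2) \<le> \<bar>x $ i1\<bar>"
  proof -
    have "(1 + \<tau>) * (a * t / 2) = t * (a\<^sup>2 * (1 + c1) + N * (c1 - 1)) / (2 * a)"
      unfolding h\<tau> N_def[symmetric] using a0 by (simp add: field_simps power2_eq_square)
    thus ?thesis using a0 by (simp add: divide_le_eq mult.commute)
  qed
  finally show ?thesis .
qed
end
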